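(* The objects of the Quillen category $\mathcal{A}_p(S)$ (i.e. the elementary abelian subgroups of $S$) are exactly the elements of the disjoint union of the sets $\mathcal{C}(L)$ for $L \in \mathcal{L}$.
   Context: Conventions: for a group $G$ acting on the right on an additive abelian group $M$, $Z^n(G,M)$, $B^n(G,M)$ are the normalised cocycles and coboundaries; for $\tau \in Z^2(G,M)$, $\mathrm{Ext}(\tau)$ is $G\times M$ with $(g,m)(h,n) = (gh, m^h+n+\tau(g,h))$. Setting: $p$ prime, $S$ an infinite pro-$p$-group of finite coclass, $T = \gamma_\ell(S)$ for $\ell$ large enough so that $T \cong \mathbb{Z}_p^d$, $P = S/T$ is a finite $p$-group and the series $T_0 = T$, $T_{i+1}=[T_i,S]$ has all indices $p$. $T$ is written additively as a $P$-module by conjugation, and $S$ is identified with $\mathrm{Ext}(\rho)$ for some $\rho \in Z^2(P,T)$, with $\epsilon: S \to P$, $(w,t)\mapsto w$, and $T$ identified with $\{(1,t)\}$. For $L \leq P$ let $\overline{L} = \epsilon^{-1}(L)$. Let $\mathcal{L}$ be the set of elementary abelian subgroups $L \leq P$ such that the restriction $\rho_L$ lies in $B^2(L,T)$ (equivalently $\overline{L}$ splits over $T$). For $L \in \mathcal{L}$ fix a complement $C_L = \{c_L(l) \mid l \in L\}$ to $T$ in $\overline{L}$, with $c_L(l) = (l, t_L(l))$. For $\delta \in Z^1(L,T)$ put $C_L(\delta) = \{(l, t_L(l)+\delta(l)) \mid l \in L\}$ and $\mathcal{C}(L) = \{ C_L(\delta) \mid \delta \in Z^1(L,T)\}$. The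 Quillen category $\mathcal{A}_p(S)$ has as objects the elementary abelian subgroups of $S$ and as morphisms the injective homomorphisms induced by conjugation in $S$. *)

theory Defs
  imports "HOL-Algebra.Algebra" "HOL-Library.FuncSet"
begin

(* The p-adic integers Z_p, as compatible sequences of residues a n in [0, p^n),
   with addition mod p^n; written in HOL-Algebra (multiplicative) notation. *)
definition Zp :: "nat \<Rightarrow> (nat \<Rightarrow> int) monoid" where
  "Zp p = \<lparr> carrier = {a. \<forall>n. 0 \<le> a n \<and> a n < int p ^ n \<and> a (Suc n) mod (int p ^ n) = a n},
           monoid.mult = (\<lambda>a b n. (a n + b n) mod (int p ^ n)),
           monoid.one = (\<lambda>n. 0) \<rparr>"

definition Zpd :: "nat \<Rightarrow> nat \<Rightarrow> (nat \<Rightarrow> nat \<Rightarrow> int) monoid" where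
  "Zpd p d = \<lparr> carrier = PiE {..<d} (\<lambda>_. carrier (Zp p)),
              monoid.mult = (\<lambda>v w. restrict (\<lambda>i. v i \<otimes>\<^bsub>Zp p\<^esub> w i) {..<d}),
              monoid.one = restrict (\<lambda>_. \<one>\<^bsub>Zp p\<^esub>) {..<d} \<rparr>"

definition finite_p_group :: "nat \<Rightarrow> ('g, 'b) monoid_scheme \<Rightarrow> bool" where
  "finite_p_group p P \<longleftrightarrow> group P \<and> finite (carrier P) \<and> (\<exists>k. order P = p ^ k)"

(* right action of P on the abelian group T by automorphisms: m^h = act h m *)
definition right_module :: "('g, 'b) monoid_scheme \<Rightarrow> ('t, 'c) monoid_scheme \<Rightarrow> ('g \<Rightarrow> 't \<Rightarrow> 't) \<Rightarrow> bool" where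
  "right_module P T act \<longleftrightarrow>
     (\<forall>g\<in>carrier P. act g \<in> hom T T \<and> bij_betw (act g) (carrier T) (carrier T)) \<and>
     (\<forall>m\<in>carrier T. act \<one>\<^bsub>P\<^esub> m = m) \<and>
     (\<forall>g\<in>carrier P. \<forall>h\<in>carrier P. \<forall>m\<in>carrier T. act h (act g m) = act (g \<otimes>\<^bsub>P\<^esub> h) m)"

(* normalised 2-cocycles, for the convention (g,m)(h,n) = (gh, m^h + n + tau(g,h)) *)
definition Z2 :: "('g, 'b) monoid_scheme \<Rightarrow> ('t, 'c) monoid_scheme \<Rightarrow> ('g \<Rightarrow> 't \<Rightarrow> 't) \<Rightarrow> ('g \<Rightarrow> 'g \<Rightarrow> 't) set" where
  "Z2 G T act = {\<tau>. (\<forall>g\<in>carrier G. \<forall>h\<in>carrier G. \<tau> g h \<in> carrier T) \<and>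
     (\<forall>g\<in>carrier G. \<tau> \<one>\<^bsub>G\<^esub> g = \<one>\<^bsub>T\<^esub> \<and> \<tau> g \<one>\<^bsub>G\<^esub> = \<one>\<^bsub>T\<^esub>) \<and>
     (\<forall>g\<in>carrier G. \<forall>h\<in>carrier G. \<forall>k\<in>carrier G.
        act k (\<tau> g h) \<otimes>\<^bsub>T\<^esub> \<tau> (g \<otimes>\<^bsub>G\<^esub> h) k = \<tau> h k \<otimes>\<^bsub>T\<^esub> \<tau> g (h \<otimes>\<^bsub>G\<^esub> k))}"

definition B2 :: "('g, 'b) monoid_scheme \<Rightarrow> ('t, 'c) monoid_scheme \<Rightarrow> ('g \<Rightarrow> 't \<Rightarrow> 't) \<Rightarrow> ('g \<Rightarrow> 'g \<Rightarrow> 't) set" where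
  "B2 G T act = {\<tau>. \<exists>f. f \<in> carrier G \<rightarrow> carrier T \<and> f \<one>\<^bsub>G\<^esub> = \<one>\<^bsub>T\<^esub> \<and>
     (\<forall>g\<in>carrier G. \<forall>h\<in>carrier G.
        \<tau> g h = f (g \<otimes>\<^bsub>G\<^esub> h) \<otimes>\<^bsub>T\<^esub> inv\<^bsub>T\<^esub> (act h (f g) \<otimes>\<^bsub>T\<^esub> f h))}"

definition Z1 :: "('g, 'b) monoid_scheme \<Rightarrow> ('t, 'c) monoid_scheme \<Rightarrow> ('g \<Rightarrow> 't \<Rightarrow> 't) \<Rightarrow> ('g \<Rightarrow> 't) set" where
  "Z1 G T act = {\<delta>. \<delta> \<in> carrier G \<rightarrow> carrier T \<and>
     (\<forall>g\<in>carrier G. \<forall>h\<in>carrier G. \<delta> (g \<otimes>\<^bsub>G\<^esub> h) = act h (\<delta> g) \<otimes>\<^bsub>T\<^esub> \<delta> h)}"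

definition Ext :: "('g, 'b) monoid_scheme \<Rightarrow> ('t, 'c) monoid_scheme \<Rightarrow> ('g \<Rightarrow> 't \<Rightarrow> 't) \<Rightarrow> ('g \<Rightarrow> 'g \<Rightarrow> 't) \<Rightarrow> ('g \<times> 't) monoid" where
  "Ext G T act \<tau> = \<lparr> carrier = carrier G \<times> carrier T,
     monoid.mult = (\<lambda>(g, m) (h, n). (g \<otimes>\<^bsub>G\<^esub> h, act h m \<otimes>\<^bsub>T\<^esub> n \<otimes>\<^bsub>T\<^esub> \<tau> g h)),
     monoid.one = (\<one>\<^bsub>G\<^esub>, \<one>\<^bsub>T\<^esub>) \<rparr>"

(* elementary abelian p-subgroup (the trivial subgroup included) *)
definition elem_ab :: "nat \<Rightarrow> ('a, 'b) monoid_scheme \<Rightarrow> 'a set \<Rightarrow> bool" where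
  "elem_ab p G E \<longleftrightarrow> subgroup E G \<and> (\<forall>x\<in>E. \<forall>y\<in>E. x \<otimes>\<^bsub>G\<^esub> y = y \<otimes>\<^bsub>G\<^esub> x) \<and>
     (\<forall>x\<in>E. x [^]\<^bsub>G\<^esub> p = \<one>\<^bsub>G\<^esub>)"

definition is_complement :: "('a, 'b) monoid_scheme \<Rightarrow> 'a set \<Rightarrow> 'a set \<Rightarrow> 'a set \<Rightarrow> bool" where
  "is_complement G H K M \<longleftrightarrow> subgroup H G \<and> H \<subseteq> M \<and> H \<inter> K = {\<one>\<^bsub>G\<^esub>} \<and> H <#>\<^bsub>G\<^esub> K = M"

definition Tsub :: "('g, 'b) monoid_scheme \<Rightarrow> ('t, 'c) monoid_scheme \<Rightarrow> ('g \<times> 't) set" where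
  "Tsub P T = {(\<one>\<^bsub>P\<^esub>, t) | t. t \<in> carrier T}"

(* \<overline>L = \<epsilon>^{-1}(L) *)
definition Lbar :: "('t, 'c) monoid_scheme \<Rightarrow> 'g set \<Rightarrow> ('g \<times> 't) set" where
  "Lbar T L = L \<times> carrier T"

definition calL :: "nat \<Rightarrow> ('g, 'b) monoid_scheme \<Rightarrow> ('t, 'c) monoid_scheme \<Rightarrow> ('g \<Rightarrow> 't \<Rightarrow> 't) \<Rightarrow> ('g \<Rightarrow> 'g \<Rightarrow> 't) \<Rightarrow> 'g set set" where
  "calL p P T act \<rho> = {L. elem_ab p P L \<and> \<rho> \<in> B2 (P\<lparr>carrier := L\<rparr>) T act}"

definition CLdelta :: "('t, 'c) monoid_scheme \<Rightarrow> ('g \<Rightarrow> 't) \<Rightarrow> 'g set \<Rightarrow> ('g \<Rightarrow> 't) \<Rightarrow> ('g \<times> 't) set" where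
  "CLdelta T tL L \<delta> = {(l, tL l \<otimes>\<^bsub>T\<^esub> \<delta> l) | l. l \<in> L}"

definition calC :: "('g, 'b) monoid_scheme \<Rightarrow> ('t, 'c) monoid_scheme \<Rightarrow> ('g \<Rightarrow> 't \<Rightarrow> 't) \<Rightarrow> ('g \<Rightarrow> 't) \<Rightarrow> 'g set \<Rightarrow> ('g \<times> 't) set set" where
  "calC P T act tL L = {CLdelta T tL L \<delta> | \<delta>. \<delta> \<in> Z1 (P\<lparr>carrier := L\<rparr>) T act}"

(* the series T_0 = T, T_{i+1} = [T_i, S] (computed via the action: [(1,t),(g,m)] = (1, -t + t^g)) *)
primrec Tser :: "('g, 'b) monoid_scheme \<Rightarrow> ('t, 'c) monoid_scheme \<Rightarrow> ('g \<Rightarrow> 't \<Rightarrow> 't) \<Rightarrow> nat \<Rightarrow> 't set" where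
  "Tser P T act 0 = carrier T"
| "Tser P T act (Suc i) = generate T {inv\<^bsub>T\<^esub> t \<otimes>\<^bsub>T\<^esub> act g t | t g. t \<in> Tser P T act i \<and> g \<in> carrier P}"

end

theory Submission imports Defs begin

locale ctx = P: group P + T: comm_group T
  for P :: "('g, 'b) monoid_scheme" and T :: "('t, 'c) monoid_scheme" +
  fixes act :: "'g \<Rightarrow> 't \<Rightarrow> 't" and \<rho> :: "'g \<Rightarrow> 'g \<Rightarrow> 't"
  assumes module: "right_module P T act" and rho: "\<rho> \<in> Z2 P T act"
begin

abbreviation "S \<equiv> Ext P T act \<rho>"

lemma act_closed[simp]: "g \<in> carrier P \<Longrightarrow> x \<in> carrier T \<Longrightarrow> act g x \<in> carrier T"
  using module unfolding right_module_def hom_def by blast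
lemma act_mult: "g \<in> carrier P \<Longrightarrow> x \<in> carrier T \<Longrightarrow> y \<in> carrier T \<Longrightarrow>
   act g (x \<otimes>\<^bsub>T\<^esub> y) = act g x \<otimes>\<^bsub>T\<^esub> act g y"
  using module unfolding right_module_def hom_def by blast
lemma act_bij: "g \<in> carrier P \<Longrightarrow> bij_betw (act g) (carrier T) (carrier T)"
  using module unfolding right_module_def by blast
lemma act_1[simp]: "m \<in> carrier T \<Longrightarrow> act \<one>\<^bsub>P\<^esub> m = m"
  using module unfolding right_module_def by blast
lemma act_comp: "g \<in> carrier P \<Longrightarrow> h \<in> carrier P \<Longrightarrow> m \<in> carrier T \<Longrightarrow>
   act h (act g m) = act (g \<otimes>\<^bsub>P\<^esub> h) m"
  using module unfolding right_module_def by blast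
lemma act_one[simp]: "g \<in> carrier P \<Longrightarrow> act g \<one>\<^bsub>T\<^esub> = \<one>\<^bsub>T\<^esub>"
proof -
  assume g: "g \<in> carrier P"
  have "act g \<one>\<^bsub>T\<^esub> \<otimes>\<^bsub>T\<^esub> act g \<one>\<^bsub>T\<^esub> = act g \<one>\<^bsub>T\<^esub> \<otimes>\<^bsub>T\<^esub> \<one>\<^bsub>T\<^esub>"
    using act_mult[OF g, of "\<one>\<^bsub>T\<^esub>" "\<one>\<^bsub>T\<^esub>"] g by simp
  then show ?thesis using g by (metis T.l_cancel T.one_closed act_closed)
qed
lemma act_inv: "g \<in> carrier P \<Longrightarrow> x \<in> carrier T \<Longrightarrow> act g (inv\<^bsub>T\<^esub> x) = inv\<^bsub>T\<^esub> act g x"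
proof -
  assume g: "g \<in> carrier P" and x: "x \<in> carrier T"
  have "act g (inv\<^bsub>T\<^esub> x) \<otimes>\<^bsub>T\<^esub> act g x = \<one>\<^bsub>T\<^esub>"
    using act_mult[OF g, of "inv\<^bsub>T\<^esub> x" x] g x by simp
  then show ?thesis using g x by (metis T.inv_equality T.inv_closed act_closed)
qed

lemma rho_closed[simp]: "g \<in> carrier P \<Longrightarrow> h \<in> carrier P \<Longrightarrow> \<rho> g h \<in> carrier T"
  using rho unfolding Z2_def by blast
lemma rho_1[simp]: "g \<in> carrier P \<Longrightarrow> \<rho> \<one>\<^bsub>P\<^esub> g = \<one>\<^bsub>T\<^esub>" "g \<in> carrier P \<Longrightarrow> \<rho> g \<one>\<^bsub>P\<^esub> = \<one>\<^bsub>T\<^esub>"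
  using rho unfolding Z2_def by blast+
lemma rho_cocycle: "g \<in> carrier P \<Longrightarrow> h \<in> carrier P \<Longrightarrow> k \<in> carrier P \<Longrightarrow>
   act k (\<rho> g h) \<otimes>\<^bsub>T\<^esub> \<rho> (g \<otimes>\<^bsub>P\<^esub> h) k = \<rho> h k \<otimes>\<^bsub>T\<^esub> \<rho> g (h \<otimes>\<^bsub>P\<^esub> k)"
  using rho unfolding Z2_def by blast

lemma S_mult[simp]: "(g, m) \<otimes>\<^bsub>S\<^esub> (h, n) = (g \<otimes>\<^bsub>P\<^esub> h, act h m \<otimes>\<^bsub>T\<^esub> n \<otimes>\<^bsub>T\<^esub> \<rho> g h)"
  by (simp add: Ext_def)
lemma S_one[simp]: "\<one>\<^bsub>S\<^esub> = (\<one>\<^bsub>P\<^esub>, \<one>\<^bsub>T\<^esub>)"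
  by (simp add: Ext_def)
lemma S_carrier[simp]: "carrier S = carrier P \<times> carrier T"
  by (simp add: Ext_def)
lemma fst_mult: "fst (x \<otimes>\<^bsub>S\<^esub> y) = fst x \<otimes>\<^bsub>P\<^esub> fst y"
  by (cases x, cases y) simp

lemma S_group: "group S"
proof (rule groupI)
  fix x y assume "x \<in> carrier S" "y \<in> carrier S"
  then show "x \<otimes>\<^bsub>S\<^esub> y \<in> carrier S" by (cases x, cases y) auto
next
  show "\<one>\<^bsub>S\<^esub> \<in> carrier S" by simp
next
  fix x assume "x \<in> carrier S"
  then show "\<one>\<^bsub>S\<^esub> \<otimes>\<^bsub>S\<^esub> x = x" by (cases x) auto
next
  fix x y z assume xyz: "x \<in> carrier S" "y \<in> carrier S" "z \<in> carrier S"
  obtain g m where x: "x = (g, m)" "g \<in> carrier P" "m \<in> carrier T" using xyz by auto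
  obtain h n where y: "y = (h, n)" "h \<in> carrier P" "n \<in> carrier T" using xyz by auto
  obtain k q where z: "z = (k, q)" "k \<in> carrier P" "q \<in> carrier T" using xyz by auto
  note c = rho_cocycle[of g h k]
  have "act k (act h m \<otimes>\<^bsub>T\<^esub> n \<otimes>\<^bsub>T\<^esub> \<rho> g h) \<otimes>\<^bsub>T\<^esub> q \<otimes>\<^bsub>T\<^esub> \<rho> (g \<otimes>\<^bsub>P\<^esub> h) k
     = act (h \<otimes>\<^bsub>P\<^esub> k) m \<otimes>\<^bsub>T\<^esub> act k n \<otimes>\<^bsub>T\<^esub> q \<otimes>\<^bsub>T\<^esub> (act k (\<rho> g h) \<otimes>\<^bsub>T\<^esub> \<rho> (g \<otimes>\<^bsub>P\<^esub> h) k)"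
    using x y z by (simp add: act_mult act_comp T.m_ac)
  also have "\<dots> = act (h \<otimes>\<^bsub>P\<^esub> k) m \<otimes>\<^bsub>T\<^esub> (act k n \<otimes>\<^bsub>T\<^esub> q \<otimes>\<^bsub>T\<^esub> \<rho> h k) \<otimes>\<^bsub>T\<^esub> \<rho> g (h \<otimes>\<^bsub>P\<^esub> k)"
    using x y z c by (simp add: T.m_ac)
  finally show "x \<otimes>\<^bsub>S\<^esub> y \<otimes>\<^bsub>S\<^esub> z = x \<otimes>\<^bsub>S\<^esub> (y \<otimes>\<^bsub>S\<^esub> z)"
    using x y z by (simp add: P.m_assoc)
next
  fix x assume "x \<in> carrier S"
  then obtain g m where x: "x = (g, m)" "g \<in> carrier P" "m \<in> carrier T" by auto
  let ?z = "inv\<^bsub>T\<^esub> (m \<otimes>\<^bsub>T\<^esub> \<rho> (inv\<^bsub>P\<^esub> g) g)"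
  have zc: "?z \<in> carrier T" using x by simp
  obtain n where n: "n \<in> carrier T" "act g n = ?z"
    using act_bij[OF x(2)] zc unfolding bij_betw_def by (metis imageE)
  have "(inv\<^bsub>P\<^esub> g, n) \<otimes>\<^bsub>S\<^esub> x = \<one>\<^bsub>S\<^esub>"
    using x n by (simp add: T.m_assoc)
  then show "\<exists>y\<in>carrier S. y \<otimes>\<^bsub>S\<^esub> x = \<one>\<^bsub>S\<^esub>" using n x by force
qed

lemma pow_T: "t \<in> carrier T \<Longrightarrow> (\<one>\<^bsub>P\<^esub>, t) [^]\<^bsub>S\<^esub> (n::nat) = (\<one>\<^bsub>P\<^esub>, t [^]\<^bsub>T\<^esub> n)"
  by (induction n) auto

lemma fst_inv: "x \<in> carrier S \<Longrightarrow> fst (inv\<^bsub>S\<^esub> x) = inv\<^bsub>P\<^esub> (fst x)"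
proof -
  assume x: "x \<in> carrier S"
  interpret S: group S by (rule S_group)
  have "fst (inv\<^bsub>S\<^esub> x) \<otimes>\<^bsub>P\<^esub> fst x = \<one>\<^bsub>P\<^esub>"
    using x fst_mult[of "inv\<^bsub>S\<^esub> x" x] by (metis S.l_inv S_one fst_conv)
  then show ?thesis using x S.inv_closed[OF x] by (metis P.inv_equality SigmaE S_carrier fst_conv)
qed

lemma fst_pow: "x \<in> carrier S \<Longrightarrow> fst (x [^]\<^bsub>S\<^esub> (n::nat)) = fst x [^]\<^bsub>P\<^esub> n"
  by (induction n) (auto simp: fst_mult)

definition tfree where "tfree p \<longleftrightarrow> (\<forall>t\<in>carrier T. t [^]\<^bsub>T\<^esub> (p::nat) = \<one>\<^bsub>T\<^esub> \<longrightarrow> t = \<one>\<^bsub>T\<^esub>)"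

lemma E_graph:
  assumes E: "elem_ab p S E" and tf: "tfree p" and x: "x \<in> E" and y: "y \<in> E" and eq: "fst x = fst y"
  shows "x = y"
proof -
  interpret S: group S by (rule S_group)
  have sub: "subgroup E S" using E unfolding elem_ab_def by blast
  have xc: "x \<in> carrier S" and yc: "y \<in> carrier S" using sub x y subgroup.subset by blast+
  define z where "z = inv\<^bsub>S\<^esub> x \<otimes>\<^bsub>S\<^esub> y"
  have zE: "z \<in> E" unfolding z_def using sub x y by (simp add: subgroup.m_closed subgroup.m_inv_closed)
  have zc: "z \<in> carrier S" using zE sub subgroup.subset by blast
  have "fst z = \<one>\<^bsub>P\<^esub>" unfolding z_def using xc yc eq by (auto simp add: fst_mult fst_inv)
  then have zz: "z = (\<one>\<^bsub>P\<^esub>, snd z)" by (metis prod.collapse)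
  have sc: "snd z \<in> carrier T" using zc by auto
  have "z [^]\<^bsub>S\<^esub> p = \<one>\<^bsub>S\<^esub>" using E zE unfolding elem_ab_def by blast
  then have "snd z [^]\<^bsub>T\<^esub> p = \<one>\<^bsub>T\<^esub>" using pow_T[OF sc, of p] zz by simp
  then have "snd z = \<one>\<^bsub>T\<^esub>" using tf sc unfolding tfree_def by blast
  then have "z = \<one>\<^bsub>S\<^esub>" using zz by simp
  then show "x = y" unfolding z_def using xc yc
    by (metis S.inv_equality S.inv_inv S.inv_closed)
qed

end

lemma (in ctx) graph_eq:
  assumes "\<forall>x\<in>E. \<forall>y\<in>E. fst x = fst y \<longrightarrow> x = y"
  shows "E = {(l, snd (SOME x. x \<in> E \<and> fst x = l)) | l. l \<in> fst ` E}"
proof -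
  have "\<And>x. x \<in> E \<Longrightarrow> (SOME y. y \<in> E \<and> fst y = fst x) = x"
    using assms by (metis (mono_tags, lifting) someI_ex)
  then show ?thesis by force
qed



lemma (in ctx) comm_calc1:
  assumes "a \<in> carrier T" "b \<in> carrier T" "r \<in> carrier T"
  shows "(a \<otimes>\<^bsub>T\<^esub> b \<otimes>\<^bsub>T\<^esub> r) \<otimes>\<^bsub>T\<^esub> inv\<^bsub>T\<^esub> (a \<otimes>\<^bsub>T\<^esub> b) = r"
proof -
  have "(a \<otimes>\<^bsub>T\<^esub> b \<otimes>\<^bsub>T\<^esub> r) \<otimes>\<^bsub>T\<^esub> inv\<^bsub>T\<^esub> (a \<otimes>\<^bsub>T\<^esub> b) = r \<otimes>\<^bsub>T\<^esub> ((a \<otimes>\<^bsub>T\<^esub> inv\<^bsub>T\<^esub> a) \<otimes>\<^bsub>T\<^esub> (b \<otimes>\<^bsub>T\<^esub> inv\<^bsub>T\<^esub> b))"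
    using assms by (simp only: T.inv_mult T.m_ac T.inv_closed T.m_closed)
  also have "\<dots> = r" using assms by simp
  finally show ?thesis .
qed

lemma (in ctx) comm_calc2:
  assumes "a \<in> carrier T" "b \<in> carrier T" "c \<in> carrier T" "d \<in> carrier T" "r \<in> carrier T"
  shows "inv\<^bsub>T\<^esub> (a \<otimes>\<^bsub>T\<^esub> b \<otimes>\<^bsub>T\<^esub> r) \<otimes>\<^bsub>T\<^esub> (c \<otimes>\<^bsub>T\<^esub> d \<otimes>\<^bsub>T\<^esub> r)
       = (inv\<^bsub>T\<^esub> a \<otimes>\<^bsub>T\<^esub> c) \<otimes>\<^bsub>T\<^esub> (inv\<^bsub>T\<^esub> b \<otimes>\<^bsub>T\<^esub> d)"
proof -
  have "inv\<^bsub>T\<^esub> (a \<otimes>\<^bsub>T\<^esub> b \<otimes>\<^bsub>T\<^esub> r) \<otimes>\<^bsub>T\<^esub> (c \<otimes>\<^bsub>T\<^esub> d \<otimes>\<^bsub>T\<^esub> r)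
     = (inv\<^bsub>T\<^esub> a \<otimes>\<^bsub>T\<^esub> c) \<otimes>\<^bsub>T\<^esub> (inv\<^bsub>T\<^esub> b \<otimes>\<^bsub>T\<^esub> d) \<otimes>\<^bsub>T\<^esub> (inv\<^bsub>T\<^esub> r \<otimes>\<^bsub>T\<^esub> r)"
    using assms by (simp only: T.inv_mult T.m_ac T.inv_closed T.m_closed)
  also have "\<dots> = (inv\<^bsub>T\<^esub> a \<otimes>\<^bsub>T\<^esub> c) \<otimes>\<^bsub>T\<^esub> (inv\<^bsub>T\<^esub> b \<otimes>\<^bsub>T\<^esub> d)" using assms by simp
  finally show ?thesis .
qed

lemma (in ctx) sub_dir:
  assumes E: "elem_ab p S E" and tf: "tfree p"
  and compl: "\<And>L. L \<in> calL p P T act \<rho> \<Longrightarrow> tL L \<in> L \<rightarrow> carrier T \<and>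
      is_complement S {(l, tL L l) | l. l \<in> L} (Tsub P T) (Lbar T L)"
  shows "\<exists>L \<in> calL p P T act \<rho>. E \<in> calC P T act (tL L) L"
proof -
  interpret S: group S by (rule S_group)
  have sub: "subgroup E S" using E unfolding elem_ab_def by blast
  have Ecomm: "\<forall>x\<in>E. \<forall>y\<in>E. x \<otimes>\<^bsub>S\<^esub> y = y \<otimes>\<^bsub>S\<^esub> x" and Epow: "\<forall>x\<in>E. x [^]\<^bsub>S\<^esub> p = \<one>\<^bsub>S\<^esub>"
    using E unfolding elem_ab_def by blast+
  have Ec: "E \<subseteq> carrier S" using sub subgroup.subset by blast
  have gr: "\<forall>x\<in>E. \<forall>y\<in>E. fst x = fst y \<longrightarrow> x = y" using E_graph[OF E tf] by blast
  define L where "L = fst ` E"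
  define s where "s = (\<lambda>l. snd (SOME x. x \<in> E \<and> fst x = l))"
  have Es: "E = {(l, s l) | l. l \<in> L}" using graph_eq[OF gr] unfolding L_def s_def .
  have memE: "\<And>l. l \<in> L \<Longrightarrow> (l, s l) \<in> E" using Es by blast
  have memE2: "\<And>l a. (l, a) \<in> E \<Longrightarrow> l \<in> L \<and> a = s l" using Es by blast
  have Lc: "\<And>l. l \<in> L \<Longrightarrow> l \<in> carrier P" and sc: "\<And>l. l \<in> L \<Longrightarrow> s l \<in> carrier T"
    using memE Ec by auto
  have srel: "\<And>g h. g \<in> L \<Longrightarrow> h \<in> L \<Longrightarrow> g \<otimes>\<^bsub>P\<^esub> h \<in> L \<and>
        s (g \<otimes>\<^bsub>P\<^esub> h) = act h (s g) \<otimes>\<^bsub>T\<^esub> s h \<otimes>\<^bsub>T\<^esub> \<rho> g h"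
  proof -
    fix g h assume g: "g \<in> L" and h: "h \<in> L"
    have "(g, s g) \<otimes>\<^bsub>S\<^esub> (h, s h) \<in> E" by (rule subgroup.m_closed[OF sub memE[OF g] memE[OF h]])
    then have "(g \<otimes>\<^bsub>P\<^esub> h, act h (s g) \<otimes>\<^bsub>T\<^esub> s h \<otimes>\<^bsub>T\<^esub> \<rho> g h) \<in> E" by simp
    from memE2[OF this]
    show "g \<otimes>\<^bsub>P\<^esub> h \<in> L \<and> s (g \<otimes>\<^bsub>P\<^esub> h) = act h (s g) \<otimes>\<^bsub>T\<^esub> s h \<otimes>\<^bsub>T\<^esub> \<rho> g h"
      by simp
  qed
  have oneE: "(\<one>\<^bsub>P\<^esub>, \<one>\<^bsub>T\<^esub>) \<in> E" using subgroup.one_closed[OF sub] by simp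
  then have L1: "\<one>\<^bsub>P\<^esub> \<in> L" and s1: "s \<one>\<^bsub>P\<^esub> = \<one>\<^bsub>T\<^esub>" using memE2[OF oneE] by auto
  have Lsub: "subgroup L P"
  proof (rule subgroup.intro)
    show "L \<subseteq> carrier P" using Lc by blast
  next
    fix x y assume "x \<in> L" "y \<in> L" then show "x \<otimes>\<^bsub>P\<^esub> y \<in> L" by (rule srel[THEN conjunct1])
  next
    show "\<one>\<^bsub>P\<^esub> \<in> L" by (rule L1)
  next
    fix x assume x: "x \<in> L"
    have "inv\<^bsub>S\<^esub> (x, s x) \<in> E" by (rule subgroup.m_inv_closed[OF sub memE[OF x]])
    moreover have "fst (inv\<^bsub>S\<^esub> (x, s x)) = inv\<^bsub>P\<^esub> x" using fst_inv[of "(x, s x)"] Lc[OF x] sc[OF x] by simp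
    ultimately show "inv\<^bsub>P\<^esub> x \<in> L" unfolding L_def by (metis image_eqI)
  qed
  have Lab: "elem_ab p P L"
    unfolding elem_ab_def
  proof (intro conjI ballI)
    show "subgroup L P" by (rule Lsub)
    fix x y assume x: "x \<in> L" and y: "y \<in> L"
    have "(x, s x) \<otimes>\<^bsub>S\<^esub> (y, s y) = (y, s y) \<otimes>\<^bsub>S\<^esub> (x, s x)"
      using Ecomm memE[OF x] memE[OF y] by blast
    then show "x \<otimes>\<^bsub>P\<^esub> y = y \<otimes>\<^bsub>P\<^esub> x" by simp
  next
    fix x assume x: "x \<in> L"
    have "(x, s x) [^]\<^bsub>S\<^esub> p = \<one>\<^bsub>S\<^esub>" using Epow memE[OF x] by blast
    then have "fst ((x, s x) [^]\<^bsub>S\<^esub> p) = \<one>\<^bsub>P\<^esub>" by simp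
    then show "x [^]\<^bsub>P\<^esub> p = \<one>\<^bsub>P\<^esub>" using fst_pow[of "(x, s x)" p] Lc[OF x] sc[OF x] by simp
  qed
  have B: "\<rho> \<in> B2 (P\<lparr>carrier := L\<rparr>) T act"
    unfolding B2_def
  proof (intro CollectI exI[of _ s] conjI ballI)
    show "s \<in> carrier (P\<lparr>carrier := L\<rparr>) \<rightarrow> carrier T" using sc by auto
    show "s \<one>\<^bsub>P\<lparr>carrier := L\<rparr>\<^esub> = \<one>\<^bsub>T\<^esub>" using s1 by simp
    fix g h assume g: "g \<in> carrier (P\<lparr>carrier := L\<rparr>)" and h: "h \<in> carrier (P\<lparr>carrier := L\<rparr>)"
    then have g': "g \<in> L" and h': "h \<in> L" by auto
    show "\<rho> g h = s (g \<otimes>\<^bsub>P\<lparr>carrier := L\<rparr>\<^esub> h) \<otimes>\<^bsub>T\<^esub> inv\<^bsub>T\<^esub> (act h (s g) \<otimes>\<^bsub>T\<^esub> s h)"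
      using srel[OF g' h'] comm_calc1[of "act h (s g)" "s h" "\<rho> g h"] Lc[OF g'] Lc[OF h'] sc[OF g'] sc[OF h']
      by simp
  qed
  have LL: "L \<in> calL p P T act \<rho>" unfolding calL_def using Lab B by blast
  define t0 where "t0 = tL L"
  have c: "t0 \<in> L \<rightarrow> carrier T \<and> is_complement S {(l, t0 l) | l. l \<in> L} (Tsub P T) (Lbar T L)"
    unfolding t0_def by (rule compl[OF LL])
  have t0c: "\<And>l. l \<in> L \<Longrightarrow> t0 l \<in> carrier T" using c[THEN conjunct1] by (rule funcset_mem)
  have Hsub: "subgroup {(l, t0 l) | l. l \<in> L} S"
    using c[THEN conjunct2] unfolding is_complement_def by (rule conjunct1)
  have trel: "\<And>g h. g \<in> L \<Longrightarrow> h \<in> L \<Longrightarrow>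
        t0 (g \<otimes>\<^bsub>P\<^esub> h) = act h (t0 g) \<otimes>\<^bsub>T\<^esub> t0 h \<otimes>\<^bsub>T\<^esub> \<rho> g h"
  proof -
    fix g h assume g: "g \<in> L" and h: "h \<in> L"
    have gm: "(g, t0 g) \<in> {(l, t0 l) | l. l \<in> L}" "(h, t0 h) \<in> {(l, t0 l) | l. l \<in> L}" using g h by blast+
    have "(g, t0 g) \<otimes>\<^bsub>S\<^esub> (h, t0 h) \<in> {(l, t0 l) | l. l \<in> L}"
      by (rule subgroup.m_closed[OF Hsub gm])
    then obtain l where "(g \<otimes>\<^bsub>P\<^esub> h, act h (t0 g) \<otimes>\<^bsub>T\<^esub> t0 h \<otimes>\<^bsub>T\<^esub> \<rho> g h) = (l, t0 l)"
      by auto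
    then show "t0 (g \<otimes>\<^bsub>P\<^esub> h) = act h (t0 g) \<otimes>\<^bsub>T\<^esub> t0 h \<otimes>\<^bsub>T\<^esub> \<rho> g h" by simp
  qed
  define \<delta> where "\<delta> = (\<lambda>l. inv\<^bsub>T\<^esub> (t0 l) \<otimes>\<^bsub>T\<^esub> s l)"
  have dZ: "\<delta> \<in> Z1 (P\<lparr>carrier := L\<rparr>) T act"
    unfolding Z1_def
  proof (intro CollectI conjI ballI)
    show "\<delta> \<in> carrier (P\<lparr>carrier := L\<rparr>) \<rightarrow> carrier T" using sc t0c unfolding \<delta>_def by auto
    fix g h assume g: "g \<in> carrier (P\<lparr>carrier := L\<rparr>)" and h: "h \<in> carrier (P\<lparr>carrier := L\<rparr>)"
    then have g': "g \<in> L" and h': "h \<in> L" by auto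
    note cs = Lc[OF g'] Lc[OF h'] sc[OF g'] sc[OF h'] t0c[OF g'] t0c[OF h']
    have "\<delta> (g \<otimes>\<^bsub>P\<^esub> h) = (inv\<^bsub>T\<^esub> (act h (t0 g)) \<otimes>\<^bsub>T\<^esub> act h (s g)) \<otimes>\<^bsub>T\<^esub> (inv\<^bsub>T\<^esub> (t0 h) \<otimes>\<^bsub>T\<^esub> s h)"
      unfolding \<delta>_def using srel[OF g' h'] trel[OF g' h'] cs comm_calc2 by simp
    also have "\<dots> = act h (\<delta> g) \<otimes>\<^bsub>T\<^esub> \<delta> h"
      unfolding \<delta>_def using cs by (simp add: act_mult act_inv)
    finally show "\<delta> (g \<otimes>\<^bsub>P\<lparr>carrier := L\<rparr>\<^esub> h) = act h (\<delta> g) \<otimes>\<^bsub>T\<^esub> \<delta> h" by simp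
  qed
  have "CLdelta T t0 L \<delta> = E"
  proof -
    have "\<And>l. l \<in> L \<Longrightarrow> t0 l \<otimes>\<^bsub>T\<^esub> \<delta> l = s l"
      unfolding \<delta>_def using sc t0c by (simp add: T.m_assoc[symmetric])
    then show ?thesis unfolding CLdelta_def Es by force
  qed
  then have "E \<in> calC P T act t0 L" unfolding calC_def using dZ by blast
  then show ?thesis using LL unfolding t0_def by blast
qed


lemma (in ctx) sup_dir:
  assumes LL: "L \<in> calL p P T act \<rho>"
  and c: "tL \<in> L \<rightarrow> carrier T \<and> is_complement S {(l, tL l) | l. l \<in> L} (Tsub P T) (Lbar T L)"
  and dZ: "\<delta> \<in> Z1 (P\<lparr>carrier := L\<rparr>) T act"
  shows "elem_ab p S (CLdelta T tL L \<delta>)"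
proof -
  interpret S: group S by (rule S_group)
  have Lab: "elem_ab p P L" using LL unfolding calL_def by blast
  have Lsub: "subgroup L P" and Lcomm: "\<forall>x\<in>L. \<forall>y\<in>L. x \<otimes>\<^bsub>P\<^esub> y = y \<otimes>\<^bsub>P\<^esub> x"
    and Lpow: "\<forall>x\<in>L. x [^]\<^bsub>P\<^esub> p = \<one>\<^bsub>P\<^esub>"
    using Lab unfolding elem_ab_def by blast+
  have Lc: "\<And>l. l \<in> L \<Longrightarrow> l \<in> carrier P" using subgroup.subset[OF Lsub] by blast
  have Lm: "\<And>g h. g \<in> L \<Longrightarrow> h \<in> L \<Longrightarrow> g \<otimes>\<^bsub>P\<^esub> h \<in> L" by (rule subgroup.m_closed[OF Lsub])
  have L1: "\<one>\<^bsub>P\<^esub> \<in> L" by (rule subgroup.one_closed[OF Lsub])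
  have Li: "\<And>g. g \<in> L \<Longrightarrow> inv\<^bsub>P\<^esub> g \<in> L" by (rule subgroup.m_inv_closed[OF Lsub])
  have t0c: "\<And>l. l \<in> L \<Longrightarrow> tL l \<in> carrier T" using c[THEN conjunct1] by (rule funcset_mem)
  have Hsub: "subgroup {(l, tL l) | l. l \<in> L} S"
    using c[THEN conjunct2] unfolding is_complement_def by (rule conjunct1)
  have trel: "\<And>g h. g \<in> L \<Longrightarrow> h \<in> L \<Longrightarrow>
        tL (g \<otimes>\<^bsub>P\<^esub> h) = act h (tL g) \<otimes>\<^bsub>T\<^esub> tL h \<otimes>\<^bsub>T\<^esub> \<rho> g h"
  proof -
    fix g h assume g: "g \<in> L" and h: "h \<in> L"
    have gm: "(g, tL g) \<in> {(l, tL l) | l. l \<in> L}" "(h, tL h) \<in> {(l, tL l) | l. l \<in> L}" using g h by blast+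
    have "(g, tL g) \<otimes>\<^bsub>S\<^esub> (h, tL h) \<in> {(l, tL l) | l. l \<in> L}"
      by (rule subgroup.m_closed[OF Hsub gm])
    then obtain l where "(g \<otimes>\<^bsub>P\<^esub> h, act h (tL g) \<otimes>\<^bsub>T\<^esub> tL h \<otimes>\<^bsub>T\<^esub> \<rho> g h) = (l, tL l)"
      by auto
    then show "tL (g \<otimes>\<^bsub>P\<^esub> h) = act h (tL g) \<otimes>\<^bsub>T\<^esub> tL h \<otimes>\<^bsub>T\<^esub> \<rho> g h" by simp
  qed
  have t1: "tL \<one>\<^bsub>P\<^esub> = \<one>\<^bsub>T\<^esub>"
  proof -
    have "\<one>\<^bsub>S\<^esub> \<in> {(l, tL l) | l. l \<in> L}" by (rule subgroup.one_closed[OF Hsub])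
    then obtain l where "(\<one>\<^bsub>P\<^esub>, \<one>\<^bsub>T\<^esub>) = (l, tL l)" by auto
    then show ?thesis by simp
  qed
  have dZ': "\<delta> \<in> L \<rightarrow> carrier T \<and> (\<forall>g\<in>L. \<forall>h\<in>L. \<delta> (g \<otimes>\<^bsub>P\<^esub> h) = act h (\<delta> g) \<otimes>\<^bsub>T\<^esub> \<delta> h)"
    using dZ unfolding Z1_def by simp
  have dc: "\<And>l. l \<in> L \<Longrightarrow> \<delta> l \<in> carrier T" using dZ'[THEN conjunct1] by (rule funcset_mem)
  have drel: "\<And>g h. g \<in> L \<Longrightarrow> h \<in> L \<Longrightarrow> \<delta> (g \<otimes>\<^bsub>P\<^esub> h) = act h (\<delta> g) \<otimes>\<^bsub>T\<^esub> \<delta> h"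
    using dZ'[THEN conjunct2] by blast
  have d1: "\<delta> \<one>\<^bsub>P\<^esub> = \<one>\<^bsub>T\<^esub>"
  proof -
    have "\<delta> \<one>\<^bsub>P\<^esub> \<otimes>\<^bsub>T\<^esub> \<delta> \<one>\<^bsub>P\<^esub> = \<delta> \<one>\<^bsub>P\<^esub> \<otimes>\<^bsub>T\<^esub> \<one>\<^bsub>T\<^esub>"
      using drel[OF L1 L1] dc[OF L1] by simp
    then show ?thesis using dc[OF L1] by (metis T.l_cancel T.one_closed)
  qed
  define cc where "cc = (\<lambda>l. tL l \<otimes>\<^bsub>T\<^esub> \<delta> l)"
  have ccc: "\<And>l. l \<in> L \<Longrightarrow> cc l \<in> carrier T" unfolding cc_def using t0c dc by simp
  have c1: "cc \<one>\<^bsub>P\<^esub> = \<one>\<^bsub>T\<^esub>" unfolding cc_def using t1 d1 by simp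
  have crel: "\<And>g h. g \<in> L \<Longrightarrow> h \<in> L \<Longrightarrow> cc (g \<otimes>\<^bsub>P\<^esub> h) = act h (cc g) \<otimes>\<^bsub>T\<^esub> cc h \<otimes>\<^bsub>T\<^esub> \<rho> g h"
  proof -
    fix g h assume g: "g \<in> L" and h: "h \<in> L"
    note cs = Lc[OF g] Lc[OF h] t0c[OF g] t0c[OF h] dc[OF g] dc[OF h]
    show "cc (g \<otimes>\<^bsub>P\<^esub> h) = act h (cc g) \<otimes>\<^bsub>T\<^esub> cc h \<otimes>\<^bsub>T\<^esub> \<rho> g h"
      unfolding cc_def trel[OF g h] drel[OF g h] using cs by (simp add: act_mult T.m_ac)
  qed
  have Edef: "CLdelta T tL L \<delta> = {(l, cc l) | l. l \<in> L}" unfolding CLdelta_def cc_def by simp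
  define E where "E = {(l, cc l) | l. l \<in> L}"
  have memE: "\<And>l. l \<in> L \<Longrightarrow> (l, cc l) \<in> E" unfolding E_def by blast
  have memE2: "\<And>x. x \<in> E \<Longrightarrow> \<exists>l\<in>L. x = (l, cc l)" unfolding E_def by blast
  have prodeq: "\<And>g h. g \<in> L \<Longrightarrow> h \<in> L \<Longrightarrow> (g, cc g) \<otimes>\<^bsub>S\<^esub> (h, cc h) = (g \<otimes>\<^bsub>P\<^esub> h, cc (g \<otimes>\<^bsub>P\<^esub> h))"
    using crel by simp
  have Esub: "subgroup E S"
  proof (rule subgroup.intro)
    show "E \<subseteq> carrier S" unfolding E_def using Lc ccc by auto
  next
    fix x y assume "x \<in> E" "y \<in> E"
    then obtain g h where g: "g \<in> L" "x = (g, cc g)" and h: "h \<in> L" "y = (h, cc h)" using memE2 by blast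
    show "x \<otimes>\<^bsub>S\<^esub> y \<in> E" using g h prodeq[OF g(1) h(1)] memE[OF Lm[OF g(1) h(1)]] by simp
  next
    show "\<one>\<^bsub>S\<^esub> \<in> E" using memE[OF L1] c1 by simp
  next
    fix x assume "x \<in> E"
    then obtain g where g: "g \<in> L" "x = (g, cc g)" using memE2 by blast
    have "(inv\<^bsub>P\<^esub> g, cc (inv\<^bsub>P\<^esub> g)) \<otimes>\<^bsub>S\<^esub> x = \<one>\<^bsub>S\<^esub>"
      using g prodeq[OF Li[OF g(1)] g(1)] Lc[OF g(1)] c1 by simp
    then have "inv\<^bsub>S\<^esub> x = (inv\<^bsub>P\<^esub> g, cc (inv\<^bsub>P\<^esub> g))"
      using g Lc[OF g(1)] ccc[OF g(1)] ccc[OF Li[OF g(1)]] Lc[OF Li[OF g(1)]]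
      by (intro S.inv_equality) auto
    then show "inv\<^bsub>S\<^esub> x \<in> E" using memE[OF Li[OF g(1)]] by simp
  qed
  have pw: "\<And>g n. g \<in> L \<Longrightarrow> g [^]\<^bsub>P\<^esub> (n::nat) \<in> L \<and> (g, cc g) [^]\<^bsub>S\<^esub> n = (g [^]\<^bsub>P\<^esub> n, cc (g [^]\<^bsub>P\<^esub> n))"
  proof -
    fix g n assume g: "g \<in> L"
    show "g [^]\<^bsub>P\<^esub> (n::nat) \<in> L \<and> (g, cc g) [^]\<^bsub>S\<^esub> n = (g [^]\<^bsub>P\<^esub> n, cc (g [^]\<^bsub>P\<^esub> n))"
    proof (induction n)
      case 0 then show ?case using L1 c1 by simp
    next
      case (Suc n)
      then show ?case using prodeq[OF Suc[THEN conjunct1] g] Lm[OF Suc[THEN conjunct1] g] by simp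
    qed
  qed
  have "elem_ab p S E"
    unfolding elem_ab_def
  proof (intro conjI ballI)
    show "subgroup E S" by (rule Esub)
    fix x y assume "x \<in> E" "y \<in> E"
    then obtain g h where g: "g \<in> L" "x = (g, cc g)" and h: "h \<in> L" "y = (h, cc h)" using memE2 by blast
    show "x \<otimes>\<^bsub>S\<^esub> y = y \<otimes>\<^bsub>S\<^esub> x" using g h prodeq[OF g(1) h(1)] prodeq[OF h(1) g(1)] Lcomm by simp
  next
    fix x assume "x \<in> E"
    then obtain g where g: "g \<in> L" "x = (g, cc g)" using memE2 by blast
    show "x [^]\<^bsub>S\<^esub> p = \<one>\<^bsub>S\<^esub>" using g pw[OF g(1), of p] Lpow c1 by simp
  qed
  then show ?thesis using Edef unfolding E_def by simp
qed

lemma fst_CLdelta: "fst ` CLdelta T t L \<delta> = L"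
  unfolding CLdelta_def by force


lemma Zpd_mult: "v \<otimes>\<^bsub>Zpd p d\<^esub> w = restrict (\<lambda>i n. (v i n + w i n) mod (int p ^ n)) {..<d}"
  by (simp add: Zpd_def Zp_def)
lemma Zpd_one: "\<one>\<^bsub>Zpd p d\<^esub> = restrict (\<lambda>i n. 0) {..<d}"
  by (simp add: Zpd_def Zp_def)
lemma Zpd_carrier: "v \<in> carrier (Zpd p d) \<longleftrightarrow> v \<in> PiE {..<d} (\<lambda>_. {a. \<forall>n. 0 \<le> a n \<and> a n < int p ^ n \<and> a (Suc n) mod (int p ^ n) = a n})"
  by (simp add: Zpd_def Zp_def)

lemma Zpd_pow: "v [^]\<^bsub>Zpd p d\<^esub> (k::nat) = restrict (\<lambda>i n. (int k * v i n) mod (int p ^ n)) {..<d}"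
proof (induction k)
  case 0 then show ?case by (simp add: Zpd_one)
next
  case (Suc k)
  then show ?case by (auto simp: Zpd_mult restrict_def fun_eq_iff mod_add_left_eq mod_add_right_eq algebra_simps)
qed

lemma Zp_tf:
  assumes p: "0 < p" and a: "\<forall>n. 0 \<le> a n \<and> a n < int p ^ n \<and> a (Suc n) mod (int p ^ n) = a n"
    and z: "\<forall>n. (int p * a n) mod (int p ^ n) = 0"
  shows "a n = 0"
proof -
  have "(int p * a (Suc n)) mod (int p ^ Suc n) = 0" using z by blast
  then have "int p * int p ^ n dvd int p * a (Suc n)" by (simp add: mod_eq_0_iff_dvd)
  then have "int p ^ n dvd a (Suc n)" using p by (simp add: dvd_mult_cancel_left)
  then have "a (Suc n) mod (int p ^ n) = 0" by simp
  then show ?thesis using a by metis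
qed

lemma double_mod:
  fixes x M :: int assumes "0 \<le> x" "x < M" "(x + x) mod M = x" shows "x = 0"
  by (metis add.right_neutral add_diff_eq assms(3) diff_self
    minus_mod_eq_mult_div mod_div_trivial mod_eq_self_iff_div_eq_0
    mod_mult_self1_is_0)


lemma T_tfree:
  assumes p: "0 < p" and T: "comm_group T" and iso: "T \<cong> Zpd p d"
  shows "\<forall>t\<in>carrier T. t [^]\<^bsub>T\<^esub> (p::nat) = \<one>\<^bsub>T\<^esub> \<longrightarrow> t = \<one>\<^bsub>T\<^esub>"
proof -
  obtain \<phi> where \<phi>: "\<phi> \<in> hom T (Zpd p d)" "bij_betw \<phi> (carrier T) (carrier (Zpd p d))"
    using iso unfolding is_iso_def iso_def by blast
  interpret T: comm_group T by (rule T)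
  let ?Z = "Zpd p d"
  have cl: "\<And>x. x \<in> carrier T \<Longrightarrow> \<phi> x \<in> carrier ?Z" using \<phi>(2) by (rule bij_betw_apply)
  have bnd: "\<And>v i n. v \<in> carrier ?Z \<Longrightarrow> i < d \<Longrightarrow> 0 \<le> v i n \<and> v i n < int p ^ n \<and> v i (Suc n) mod (int p ^ n) = v i n"
    unfolding Zpd_carrier by (auto simp: PiE_iff)
  have arb: "\<And>v i. v \<in> carrier ?Z \<Longrightarrow> \<not> i < d \<Longrightarrow> v i = undefined"
    unfolding Zpd_carrier by (auto simp: PiE_iff extensional_def)
  have u: "\<phi> \<one>\<^bsub>T\<^esub> = \<one>\<^bsub>?Z\<^esub>"
  proof (rule ext)
    fix i
    have e: "\<phi> \<one>\<^bsub>T\<^esub> \<otimes>\<^bsub>?Z\<^esub> \<phi> \<one>\<^bsub>T\<^esub> = \<phi> \<one>\<^bsub>T\<^esub>" using hom_mult[OF \<phi>(1), of "\<one>\<^bsub>T\<^esub>" "\<one>\<^bsub>T\<^esub>"] by simp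
    show "\<phi> \<one>\<^bsub>T\<^esub> i = \<one>\<^bsub>?Z\<^esub> i"
    proof (cases "i < d")
      case True
      show ?thesis
      proof (rule ext)
        fix n
        have "(\<phi> \<one>\<^bsub>T\<^esub> i n + \<phi> \<one>\<^bsub>T\<^esub> i n) mod (int p ^ n) = \<phi> \<one>\<^bsub>T\<^esub> i n"
          using fun_cong[OF fun_cong[OF e, of i], of n] True by (simp add: Zpd_mult)
        then have "\<phi> \<one>\<^bsub>T\<^esub> i n = 0" using double_mod bnd[OF cl[OF T.one_closed] True, of n] by blast
        then show "\<phi> \<one>\<^bsub>T\<^esub> i n = \<one>\<^bsub>?Z\<^esub> i n" using True by (simp add: Zpd_one)
      qed
    next
      case False
      then show ?thesis using arb[OF cl[OF T.one_closed] False] by (simp add: Zpd_one)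
    qed
  qed
  have pw: "\<And>t n. t \<in> carrier T \<Longrightarrow> \<phi> (t [^]\<^bsub>T\<^esub> (n::nat)) = \<phi> t [^]\<^bsub>?Z\<^esub> n"
  proof -
    fix t n assume t: "t \<in> carrier T"
    show "\<phi> (t [^]\<^bsub>T\<^esub> (n::nat)) = \<phi> t [^]\<^bsub>?Z\<^esub> n"
      by (induction n) (simp_all add: u hom_mult[OF \<phi>(1)] t)
  qed
  show ?thesis
  proof (intro ballI impI)
    fix t assume t: "t \<in> carrier T" and tp: "t [^]\<^bsub>T\<^esub> p = \<one>\<^bsub>T\<^esub>"
    have e: "\<phi> t [^]\<^bsub>?Z\<^esub> p = \<one>\<^bsub>?Z\<^esub>" using pw[OF t, of p] tp u by simp
    have "\<phi> t = \<phi> \<one>\<^bsub>T\<^esub>"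
    proof (rule ext)
      fix i
      show "\<phi> t i = \<phi> \<one>\<^bsub>T\<^esub> i"
      proof (cases "i < d")
        case True
        have z: "\<forall>n. (int p * \<phi> t i n) mod (int p ^ n) = 0"
        proof
          fix n show "(int p * \<phi> t i n) mod (int p ^ n) = 0"
            using fun_cong[OF fun_cong[OF e, of i], of n] True by (simp add: Zpd_pow Zpd_one)
        qed
        have "\<forall>n. 0 \<le> \<phi> t i n \<and> \<phi> t i n < int p ^ n \<and> \<phi> t i (Suc n) mod (int p ^ n) = \<phi> t i n"
          using bnd[OF cl[OF t] True] by blast
        then have "\<And>n. \<phi> t i n = 0" using Zp_tf[OF p _ z] by blast
        then show ?thesis using True u by (simp add: Zpd_one fun_eq_iff)
      next
        case False
        then show ?thesis using arb[OF cl[OF t] False] arb[OF cl[OF T.one_closed] False] by simp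
      qed
    qed
    then show "t = \<one>\<^bsub>T\<^esub>" using \<phi>(2) t T.one_closed unfolding bij_betw_def inj_on_def by blast
  qed
qed

theorem theorem3p1:
  fixes p d :: nat
    and P :: "('g, 'b) monoid_scheme"
    and T :: "('t, 'c) monoid_scheme"
    and act :: "'g \<Rightarrow> 't \<Rightarrow> 't"
    and \<rho> :: "'g \<Rightarrow> 'g \<Rightarrow> 't"
    and tL :: "'g set \<Rightarrow> 'g \<Rightarrow> 't"
  assumes prime: "Factorial_Ring.prime p"
    and P: "finite_p_group p P"
    and T: "comm_group T"
    and T_Zpd: "T \<cong> Zpd p d"
    and module: "right_module P T act"
    and rho: "\<rho> \<in> Z2 P T act"
    and S_infinite: "infinite (carrier (Ext P T act \<rho>))"
    and series: "\<And>i. Tser P T act (Suc i) \<subseteq> Tser P T act i \<and>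
                   card (rcosets\<^bsub>T\<lparr>carrier := Tser P T act i\<rparr>\<^esub> (Tser P T act (Suc i))) = p"
    and compl: "\<And>L. L \<in> calL p P T act \<rho> \<Longrightarrow>
                   tL L \<in> L \<rightarrow> carrier T \<and>
                   is_complement (Ext P T act \<rho>) {(l, tL L l) | l. l \<in> L} (Tsub P T) (Lbar T L)"
  shows "{E. elem_ab p (Ext P T act \<rho>) E} = (\<Union>L\<in>calL p P T act \<rho>. calC P T act (tL L) L)
         \<and> (\<forall>L1\<in>calL p P T act \<rho>. \<forall>L2\<in>calL p P T act \<rho>.
               L1 \<noteq> L2 \<longrightarrow> calC P T act (tL L1) L1 \<inter> calC P T act (tL L2) L2 = {})"
proof -
  have gP: "group P" using P unfolding finite_p_group_def by blast
  have p0: "0 < p" using prime by (simp add: prime_gt_0_nat)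
  have ctx: "ctx P T act \<rho>" unfolding ctx_def ctx_axioms_def using gP T module rho by blast
  have tf: "ctx.tfree T p" using T_tfree[OF p0 T T_Zpd] ctx.tfree_def[OF ctx] by blast
  have A: "{E. elem_ab p (Ext P T act \<rho>) E} = (\<Union>L\<in>calL p P T act \<rho>. calC P T act (tL L) L)"
  proof (rule equalityI; rule subsetI)
    fix E assume "E \<in> {E. elem_ab p (Ext P T act \<rho>) E}"
    then have "elem_ab p (Ext P T act \<rho>) E" by simp
    from ctx.sub_dir[OF ctx this tf compl]
    show "E \<in> (\<Union>L\<in>calL p P T act \<rho>. calC P T act (tL L) L)" by blast
  next
    fix E assume "E \<in> (\<Union>L\<in>calL p P T act \<rho>. calC P T act (tL L) L)"
    then obtain L \<delta> where L: "L \<in> calL p P T act \<rho>" and d: "\<delta> \<in> Z1 (P\<lparr>carrier := L\<rparr>) T act"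
      and E: "E = CLdelta T (tL L) L \<delta>" unfolding calC_def by blast
    show "E \<in> {E. elem_ab p (Ext P T act \<rho>) E}"
      using ctx.sup_dir[OF ctx L compl[OF L] d] E by simp
  qed
  have B: "\<forall>L1\<in>calL p P T act \<rho>. \<forall>L2\<in>calL p P T act \<rho>.
               L1 \<noteq> L2 \<longrightarrow> calC P T act (tL L1) L1 \<inter> calC P T act (tL L2) L2 = {}"
  proof (intro ballI impI)
    fix L1 L2 :: "'g set" assume ne: "L1 \<noteq> L2"
    show "calC P T act (tL L1) L1 \<inter> calC P T act (tL L2) L2 = {}"
    proof (rule ccontr)
      assume "calC P T act (tL L1) L1 \<inter> calC P T act (tL L2) L2 \<noteq> {}"
      then obtain \<delta>1 \<delta>2 where "CLdelta T (tL L1) L1 \<delta>1 = CLdelta T (tL L2) L2 \<delta>2"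
        unfolding calC_def by blast
      then have "fst ` CLdelta T (tL L1) L1 \<delta>1 = fst ` CLdelta T (tL L2) L2 \<delta>2" by simp
      then show False using ne fst_CLdelta by metis
    qed
  qed
  show ?thesis using A B by blast
qed

end
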